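(* For every orthomodular lattice $X$ there is a bijection $\mathrm{char}:\mathrm{KSub}(X)\to\mathbf{OMLatGal}(2,X)$, sending the kernel $a:\downarrow a\to X$ to the morphism $\bar a:2\to X$ with $\bar a_*(0)=1$, $\bar a_*(1)=a^\perp$, $\bar a^*(x)=1$ if $x\le a^\perp$ and $0$ otherwise. It is natural: for every morphism $f:X\to Y$ of $\mathbf{OMLatGal}$, $\mathrm{char}\circ\exists_f=(f\circ-)\circ\mathrm{char}$, i.e. $\mathrm{char}(\exists_f(m))=f\circ\mathrm{char}(m)$ for all $m\in\mathrm{KSub}(X)$.
   Context: An orthomodular lattice is a bounded lattice with an order-reversing involution $x\mapsto x^\perp$ such that $x\wedge x^\perp=0$, $x\vee x^\perp=1$, and $x\le y$ implies $y=x\vee(x^\perp\wedge y)$. $2=\{0,1\}$ is the two-element Boolean algebra. The category $\mathbf{OMLatGal}$ has orthomodular lattices as objects; a morphism $f:X\to Y$ is a pair $(f_*,f^* )$ of order-reversing functions $f_*:X\to Y$, $f^*:Y\to X$ such that $y\le f_*(x)$ iff $x\le f^*(y)$. Identity: both components $x\mapsto x^\perp$. Composition: $(g\circ f)_*=g_*\circ(-)^\perp\circ f_*$, $(g\circ f)^*=f^*\circ(-)^\perp\circ g^*$. Dagger: $(f_*,f^* )^\dagger=(f^*,f_* )$. It is a dagger kernel category (zero object the one-element lattice); for $a\in X$, $\downarrow a=\{u\le a\}$ with complement $u^{\perp_a}=a\wedge u^\perp$, and the downset morphism $a:\downarrow a\to X$ ($a_*(u)=u^\perp$, $a^*(x)=a\wedge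 x^\perp$) is a dagger kernel; every kernel into $X$ is isomorphic to exactly one such. $\mathrm{KSub}(X)$ denotes the poset of dagger-mono kernels into $X$ modulo isomorphism. In a dagger kernel category $\mathrm{coker}(g)=\ker(g^\dagger)^\dagger$ and $\exists_f(m)=\ker(\mathrm{coker}(f\circ m))$. *)

theory Defs
  imports Main
begin

record 'a oml =
  carrier :: "'a set"
  le :: "'a \<Rightarrow> 'a \<Rightarrow> bool"
  orth :: "'a \<Rightarrow> 'a"

definition top :: "'a oml \<Rightarrow> 'a" where
  "top X = (THE t. t \<in> carrier X \<and> (\<forall>x\<in>carrier X. le X x t))"

definition bot :: "'a oml \<Rightarrow> 'a" where
  "bot X = (THE b. b \<in> carrier X \<and> (\<forall>x\<in>carrier X. le X b x))"

definition meet :: "'a oml \<Rightarrow> 'a \<Rightarrow> 'a \<Rightarrow> 'a" where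
  "meet X x y = (THE z. z \<in> carrier X \<and> le X z x \<and> le X z y \<and>
      (\<forall>w\<in>carrier X. le X w x \<and> le X w y \<longrightarrow> le X w z))"

definition join :: "'a oml \<Rightarrow> 'a \<Rightarrow> 'a \<Rightarrow> 'a" where
  "join X x y = (THE z. z \<in> carrier X \<and> le X x z \<and> le X y z \<and>
      (\<forall>w\<in>carrier X. le X x w \<and> le X y w \<longrightarrow> le X z w))"

definition is_oml :: "'a oml \<Rightarrow> bool" where
  "is_oml X \<longleftrightarrow>
     (\<forall>x\<in>carrier X. le X x x) \<and>
     (\<forall>x\<in>carrier X. \<forall>y\<in>carrier X. le X x y \<and> le X y x \<longrightarrow> x = y) \<and>
     (\<forall>x\<in>carrier X. \<forall>y\<in>carrier X. \<forall>z\<in>carrier X. le X x y \<and> le X y z \<longrightarrow> le X x z) \<and>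
     (\<forall>x\<in>carrier X. \<forall>y\<in>carrier X. \<exists>z\<in>carrier X. le X z x \<and> le X z y \<and>
         (\<forall>w\<in>carrier X. le X w x \<and> le X w y \<longrightarrow> le X w z)) \<and>
     (\<forall>x\<in>carrier X. \<forall>y\<in>carrier X. \<exists>z\<in>carrier X. le X x z \<and> le X y z \<and>
         (\<forall>w\<in>carrier X. le X x w \<and> le X y w \<longrightarrow> le X z w)) \<and>
     (\<exists>t\<in>carrier X. \<forall>x\<in>carrier X. le X x t) \<and>
     (\<exists>b\<in>carrier X. \<forall>x\<in>carrier X. le X b x) \<and>
     (\<forall>x\<in>carrier X. orth X x \<in> carrier X) \<and>
     (\<forall>x\<in>carrier X. orth X (orth X x) = x) \<and>
     (\<forall>x\<in>carrier X. \<forall>y\<in>carrier X. le X x y \<longrightarrow> le X (orth X y) (orth X x)) \<and>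
     (\<forall>x\<in>carrier X. meet X x (orth X x) = bot X) \<and>
     (\<forall>x\<in>carrier X. join X x (orth X x) = top X) \<and>
     (\<forall>x\<in>carrier X. \<forall>y\<in>carrier X. le X x y \<longrightarrow> y = join X x (meet X (orth X x) y))"

text \<open>The two-element Boolean algebra 2 = {0,1}, with 0 = False, 1 = True.\<close>
definition two :: "bool oml" where
  "two = \<lparr>carrier = UNIV, le = (\<lambda>x y. x \<longrightarrow> y), orth = Not\<rparr>"

text \<open>A morphism X \<rightarrow> Y is a pair (f_*, f^*). Components are normalised to
  be undefined outside the carriers, so that equality of morphisms is plain equality.\<close>
type_synonym ('a, 'b) mor = "('a \<Rightarrow> 'b) \<times> ('b \<Rightarrow> 'a)"

definition hom :: "'a oml \<Rightarrow> 'b oml \<Rightarrow> ('a, 'b) mor set" where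
  "hom X Y = {f.
     (\<forall>x\<in>carrier X. fst f x \<in> carrier Y) \<and>
     (\<forall>y\<in>carrier Y. snd f y \<in> carrier X) \<and>
     (\<forall>x\<in>carrier X. \<forall>x'\<in>carrier X. le X x x' \<longrightarrow> le Y (fst f x') (fst f x)) \<and>
     (\<forall>y\<in>carrier Y. \<forall>y'\<in>carrier Y. le Y y y' \<longrightarrow> le X (snd f y') (snd f y)) \<and>
     (\<forall>x\<in>carrier X. \<forall>y\<in>carrier Y. le Y y (fst f x) \<longleftrightarrow> le X x (snd f y)) \<and>
     (\<forall>x. x \<notin> carrier X \<longrightarrow> fst f x = undefined) \<and>
     (\<forall>y. y \<notin> carrier Y \<longrightarrow> snd f y = undefined)}"

definition comp :: "'a oml \<Rightarrow> 'b oml \<Rightarrow> 'c oml \<Rightarrow> ('b, 'c) mor \<Rightarrow> ('a, 'b) mor \<Rightarrow> ('a, 'c) mor" where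
  "comp X Y Z g f =
     (\<lambda>x. if x \<in> carrier X then fst g (orth Y (fst f x)) else undefined,
      \<lambda>z. if z \<in> carrier Z then snd f (orth Y (snd g z)) else undefined)"

definition dagger :: "('a, 'b) mor \<Rightarrow> ('b, 'a) mor" where
  "dagger f = (snd f, fst f)"

definition zero_obj :: "unit oml" where
  "zero_obj = \<lparr>carrier = UNIV, le = (\<lambda>_ _. True), orth = id\<rparr>"

definition to_zero :: "'a oml \<Rightarrow> ('a, unit) mor" where
  "to_zero X = (\<lambda>x. if x \<in> carrier X then () else undefined, \<lambda>_. top X)"

definition from_zero :: "'b oml \<Rightarrow> (unit, 'b) mor" where
  "from_zero Y = (\<lambda>_. top Y, \<lambda>y. if y \<in> carrier Y then () else undefined)"

definition zero_mor :: "'a oml \<Rightarrow> 'b oml \<Rightarrow> ('a, 'b) mor" where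
  "zero_mor X Y = comp X zero_obj Y (from_zero Y) (to_zero X)"

definition down :: "'a oml \<Rightarrow> 'a \<Rightarrow> 'a oml" where
  "down X a = \<lparr>carrier = {u \<in> carrier X. le X u a}, le = le X,
               orth = (\<lambda>u. meet X a (orth X u))\<rparr>"

definition downmor :: "'a oml \<Rightarrow> 'a \<Rightarrow> ('a, 'a) mor" where
  "downmor X a =
     (\<lambda>u. if u \<in> carrier (down X a) then orth X u else undefined,
      \<lambda>x. if x \<in> carrier X then meet X a (orth X x) else undefined)"

text \<open>KSub(X) is represented by carrier X: the element a stands for the class of
  the downset kernel a : \<down>a \<rightarrow> X (every kernel is isomorphic to exactly one such),
  ordered by factorisation, i.e. by the order of X.\<close>
definition ker_el :: "'a oml \<Rightarrow> 'b oml \<Rightarrow> ('a, 'b) mor \<Rightarrow> 'a" where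
  "ker_el X Y g = (THE a. a \<in> carrier X \<and>
       comp (down X a) X Y g (downmor X a) = zero_mor (down X a) Y \<and>
       (\<forall>b\<in>carrier X. comp (down X b) X Y g (downmor X b) = zero_mor (down X b) Y
            \<longrightarrow> le X b a))"

text \<open>\<exists>_f(m) = ker(coker(f \<circ> m)) with coker(g) = ker(g^\<dagger>)^\<dagger>.\<close>
definition ex_im :: "'a oml \<Rightarrow> 'b oml \<Rightarrow> ('a, 'b) mor \<Rightarrow> 'a \<Rightarrow> 'b" where
  "ex_im X Y f a =
     (let g = comp (down X a) X Y f (downmor X a);
          c = ker_el Y (down X a) (dagger g)
      in ker_el Y (down Y c) (dagger (downmor Y c)))"

definition char :: "'a oml \<Rightarrow> 'a \<Rightarrow> (bool, 'a) mor" where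
  "char X a = (\<lambda>b. if b then orth X a else top X,
               \<lambda>x. if x \<in> carrier X then le X x (orth X a) else undefined)"

end

theory Submission
  imports Defs
begin
lemma oml_refl0: assumes "is_oml X" shows "\<forall>x\<in>carrier X. le X x x"
  using assms unfolding is_oml_def by (elim conjE) assumption

lemma oml_antisym0: assumes "is_oml X" shows "\<forall>x\<in>carrier X. \<forall>y\<in>carrier X. le X x y \<and> le X y x \<longrightarrow> x = y"
  using assms unfolding is_oml_def by (elim conjE) assumption

lemma oml_trans0: assumes "is_oml X" shows "\<forall>x\<in>carrier X. \<forall>y\<in>carrier X. \<forall>z\<in>carrier X. le X x y \<and> le X y z \<longrightarrow> le X x z"
  using assms unfolding is_oml_def by (elim conjE) assumption

lemma oml_meet0: assumes "is_oml X" shows "\<forall>x\<in>carrier X. \<forall>y\<in>carrier X. \<exists>z\<in>carrier X. le X z x \<and> le X z y \<and>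
         (\<forall>w\<in>carrier X. le X w x \<and> le X w y \<longrightarrow> le X w z)"
  using assms unfolding is_oml_def by (elim conjE) assumption

lemma oml_top0: assumes "is_oml X" shows "\<exists>t\<in>carrier X. \<forall>x\<in>carrier X. le X x t"
  using assms unfolding is_oml_def by (elim conjE) assumption

lemma oml_orth0: assumes "is_oml X" shows "\<forall>x\<in>carrier X. orth X x \<in> carrier X"
  using assms unfolding is_oml_def by (elim conjE) assumption

lemma oml_oo0: assumes "is_oml X" shows "\<forall>x\<in>carrier X. orth X (orth X x) = x"
  using assms unfolding is_oml_def by (elim conjE) assumption

lemma oml_anti0: assumes "is_oml X" shows "\<forall>x\<in>carrier X. \<forall>y\<in>carrier X. le X x y \<longrightarrow> le X (orth X y) (orth X x)"
  using assms unfolding is_oml_def by (elim conjE) assumption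

lemma oml_refl: "is_oml X \<Longrightarrow> x \<in> carrier X \<Longrightarrow> le X x x"
  using oml_refl0 by blast
lemma oml_antisym: "is_oml X \<Longrightarrow> x \<in> carrier X \<Longrightarrow> y \<in> carrier X \<Longrightarrow> le X x y \<Longrightarrow> le X y x \<Longrightarrow> x = y"
  using oml_antisym0 by blast
lemma oml_trans: "is_oml X \<Longrightarrow> x \<in> carrier X \<Longrightarrow> y \<in> carrier X \<Longrightarrow> z \<in> carrier X \<Longrightarrow> le X x y \<Longrightarrow> le X y z \<Longrightarrow> le X x z"
  using oml_trans0 by blast
lemma oml_orth: "is_oml X \<Longrightarrow> x \<in> carrier X \<Longrightarrow> orth X x \<in> carrier X"
  using oml_orth0 by blast
lemma oml_orth_orth: "is_oml X \<Longrightarrow> x \<in> carrier X \<Longrightarrow> orth X (orth X x) = x"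
  using oml_oo0 by blast
lemma oml_orth_anti: "is_oml X \<Longrightarrow> x \<in> carrier X \<Longrightarrow> y \<in> carrier X \<Longrightarrow> le X x y \<Longrightarrow> le X (orth X y) (orth X x)"
  using oml_anti0 by blast
lemma oml_le_orth: "is_oml X \<Longrightarrow> x \<in> carrier X \<Longrightarrow> y \<in> carrier X \<Longrightarrow> le X x (orth X y) \<longleftrightarrow> le X y (orth X x)"
  by (metis oml_orth oml_orth_anti oml_orth_orth)
lemma top_unique: assumes X: "is_oml X" and t: "t \<in> carrier X" and h: "\<forall>x\<in>carrier X. le X x t"
  shows "Defs.top X = t"
  unfolding top_def
proof (rule the_equality)
  show "t \<in> carrier X \<and> (\<forall>x\<in>carrier X. le X x t)" using t h by simp
  fix s assume s: "s \<in> carrier X \<and> (\<forall>x\<in>carrier X. le X x s)"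
  then show "s = t" using oml_antisym[OF X _ t] t h by simp
qed

lemma top_prop: assumes "is_oml X" shows "Defs.top X \<in> carrier X" "\<And>x. x \<in> carrier X \<Longrightarrow> le X x (Defs.top X)"
proof -
  obtain t where "t \<in> carrier X" "\<forall>x\<in>carrier X. le X x t" using oml_top0[OF assms] by blast
  then have "Defs.top X = t" by (intro top_unique[OF assms]) 
  then show "Defs.top X \<in> carrier X" "\<And>x. x \<in> carrier X \<Longrightarrow> le X x (Defs.top X)"
    using \<open>t \<in> carrier X\<close> \<open>\<forall>x\<in>carrier X. le X x t\<close> by auto
qed

lemma meet_prop: assumes X: "is_oml X" and x: "x \<in> carrier X" and y: "y \<in> carrier X"
  shows "meet X x y \<in> carrier X \<and> le X (meet X x y) x \<and> le X (meet X x y) y \<and>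
      (\<forall>w\<in>carrier X. le X w x \<and> le X w y \<longrightarrow> le X w (meet X x y))"
proof -
  obtain z where z: "z \<in> carrier X" "le X z x" "le X z y"
      "\<forall>w\<in>carrier X. le X w x \<and> le X w y \<longrightarrow> le X w z"
    using bspec[OF bspec[OF oml_meet0[OF X] x] y] by blast
  have "meet X x y = z" unfolding meet_def
  proof (rule the_equality)
    show "z \<in> carrier X \<and> le X z x \<and> le X z y \<and>
      (\<forall>w\<in>carrier X. le X w x \<and> le X w y \<longrightarrow> le X w z)" using z by simp
    fix s assume s: "s \<in> carrier X \<and> le X s x \<and> le X s y \<and>
      (\<forall>w\<in>carrier X. le X w x \<and> le X w y \<longrightarrow> le X w s)"
    have s1: "s \<in> carrier X" "le X s x" "le X s y" using s by auto
    have "le X s z" using z(4) s1 by blast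
    moreover have "le X z s" using s z(1,2,3) by blast
    ultimately show "s = z" using oml_antisym[OF X s1(1) z(1)] by blast
  qed
  then show ?thesis using z by simp
qed

lemma meet_eq_left: assumes X: "is_oml X" and x: "x \<in> carrier X" and y: "y \<in> carrier X"
  shows "meet X x y = x \<longleftrightarrow> le X x y"
proof
  assume "meet X x y = x" then show "le X x y" using meet_prop[OF X x y] by simp
next
  assume h: "le X x y"
  have m: "meet X x y \<in> carrier X" "le X (meet X x y) x" "le X x (meet X x y)"
    using meet_prop[OF X x y] h oml_refl[OF X x] x by auto
  show "meet X x y = x" using oml_antisym[OF X m(1) x m(2) m(3)] .
qed

lemma top_down: assumes X: "is_oml X" and a: "a \<in> carrier X" shows "Defs.top (down X a) = a"
  unfolding top_def
proof (rule the_equality)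
  show "a \<in> carrier (down X a) \<and> (\<forall>x\<in>carrier (down X a). le (down X a) x a)"
    using a oml_refl[OF X a] by (simp add: down_def)
  fix s assume s: "s \<in> carrier (down X a) \<and> (\<forall>x\<in>carrier (down X a). le (down X a) x s)"
  have "a \<in> carrier (down X a)" using a oml_refl[OF X a] by (simp add: down_def)
  then have "le X a s" using s by (simp add: down_def)
  moreover have "le X s a" "s \<in> carrier X" using s by (auto simp add: down_def)
  ultimately show "s = a" using oml_antisym[OF X _ a] by simp
qed

lemma zero_mor_eq: "zero_mor A B = (\<lambda>x. if x \<in> carrier A then Defs.top B else undefined,
    \<lambda>z. if z \<in> carrier B then Defs.top A else undefined)"
  unfolding zero_mor_def comp_def from_zero_def to_zero_def zero_obj_def by auto

lemma hom_D:
  assumes "f \<in> hom X Y"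
  shows "\<And>x. x\<in>carrier X \<Longrightarrow> fst f x \<in> carrier Y"
    "\<And>y. y\<in>carrier Y \<Longrightarrow> snd f y \<in> carrier X"
    "\<And>x x'. x\<in>carrier X \<Longrightarrow> x'\<in>carrier X \<Longrightarrow> le X x x' \<Longrightarrow> le Y (fst f x') (fst f x)"
    "\<And>x y. x\<in>carrier X \<Longrightarrow> y\<in>carrier Y \<Longrightarrow> le Y y (fst f x) \<longleftrightarrow> le X x (snd f y)"
    "\<And>y. y \<notin> carrier Y \<Longrightarrow> snd f y = undefined"
  using assms unfolding hom_def by auto

lemma ker_el_eq:
  assumes X: "is_oml X" and a: "a \<in> carrier X"
    and P: "\<And>b. b \<in> carrier X \<Longrightarrow> comp (down X b) X Y g (downmor X b) = zero_mor (down X b) Y \<longleftrightarrow> le X b a"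
  shows "ker_el X Y g = a"
  unfolding ker_el_def
proof (rule the_equality)
  show "a \<in> carrier X \<and>
       comp (down X a) X Y g (downmor X a) = zero_mor (down X a) Y \<and>
       (\<forall>b\<in>carrier X. comp (down X b) X Y g (downmor X b) = zero_mor (down X b) Y
            \<longrightarrow> le X b a)"
  proof (intro conjI ballI impI)
    show "a \<in> carrier X" by (rule a)
    show "comp (down X a) X Y g (downmor X a) = zero_mor (down X a) Y"
      using P[OF a] oml_refl[OF X a] by simp
    fix b assume "b \<in> carrier X" "comp (down X b) X Y g (downmor X b) = zero_mor (down X b) Y"
    then show "le X b a" using P by simp
  qed
  fix s assume s: "s \<in> carrier X \<and>
       comp (down X s) X Y g (downmor X s) = zero_mor (down X s) Y \<and>
       (\<forall>b\<in>carrier X. comp (down X b) X Y g (downmor X b) = zero_mor (down X b) Y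
            \<longrightarrow> le X b s)"
  have s1: "s \<in> carrier X" using s by blast
  have "comp (down X s) X Y g (downmor X s) = zero_mor (down X s) Y" using s by (elim conjE)
  then have "le X s a" using P[OF s1] by simp
  have za: "comp (down X a) X Y g (downmor X a) = zero_mor (down X a) Y"
      using P[OF a] oml_refl[OF X a] by simp
  have "le X a s" using s a za by (elim conjE) (erule ballE, erule impE, assumption+, simp)
  then show "s = a" using oml_antisym[OF X s1 a] \<open>le X s a\<close> by blast
qed

lemma comp1_eq:
  assumes X: "is_oml X" and Y: "is_oml Y" and f: "f \<in> hom X Y" and m: "m \<in> carrier X" and b: "b \<in> carrier Y"
  shows "comp (down Y b) Y (down X m) (dagger (comp (down X m) X Y f (downmor X m))) (downmor Y b)
    = (\<lambda>z. if z \<in> carrier (down Y b) then meet X m (snd f z) else undefined,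
       \<lambda>u. if u \<in> carrier (down X m) then meet Y b (fst f u) else undefined)"
  using hom_D[OF f] oml_orth[OF X] oml_orth_orth[OF X] oml_orth[OF Y] oml_orth_orth[OF Y]
  unfolding comp_def dagger_def downmor_def
  by (auto simp: fun_eq_iff down_def)

lemma ker1:
  assumes X: "is_oml X" and Y: "is_oml Y" and f: "f \<in> hom X Y" and m: "m \<in> carrier X"
  shows "ker_el Y (down X m) (dagger (comp (down X m) X Y f (downmor X m))) = fst f m"
proof (rule ker_el_eq[OF Y hom_D(1)[OF f m]])
  fix b assume b: "b \<in> carrier Y"
  show "comp (down Y b) Y (down X m) (dagger (comp (down X m) X Y f (downmor X m))) (downmor Y b) =
          zero_mor (down Y b) (down X m) \<longleftrightarrow> le Y b (fst f m)"
    unfolding comp1_eq[OF assms b] zero_mor_eq top_down[OF X m] top_down[OF Y b]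
  proof
    assume h: "(\<lambda>z. if z \<in> carrier (down Y b) then meet X m (snd f z) else undefined,
       \<lambda>u. if u \<in> carrier (down X m) then meet Y b (fst f u) else undefined) =
      (\<lambda>x. if x \<in> carrier (down Y b) then m else undefined,
       \<lambda>z. if z \<in> carrier (down X m) then b else undefined)"
    have "b \<in> carrier (down Y b)" using b oml_refl[OF Y] by (simp add: down_def)
    then have "meet X m (snd f b) = m" using fun_cong[OF arg_cong[OF h, of fst], of b] by simp
    then have "le X m (snd f b)" using meet_eq_left[OF X m hom_D(2)[OF f b]] by simp
    then show "le Y b (fst f m)" using hom_D(4)[OF f m b] by simp
  next
    assume h: "le Y b (fst f m)"
    have A: "meet X m (snd f z) = m" if "z \<in> carrier (down Y b)" for z
    proof -
      have z: "z \<in> carrier Y" "le Y z b" using that by (auto simp: down_def)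
      have "le Y z (fst f m)" using oml_trans[OF Y z(1) b hom_D(1)[OF f m] z(2) h] .
      then show ?thesis using hom_D(4)[OF f m z(1)] meet_eq_left[OF X m hom_D(2)[OF f z(1)]] by simp
    qed
    have B: "meet Y b (fst f u) = b" if "u \<in> carrier (down X m)" for u
    proof -
      have u: "u \<in> carrier X" "le X u m" using that by (auto simp: down_def)
      have "le Y (fst f m) (fst f u)" using hom_D(3)[OF f u(1) m u(2)] .
      then have "le Y b (fst f u)" using oml_trans[OF Y b hom_D(1)[OF f m] hom_D(1)[OF f u(1)] h] by simp
      then show ?thesis using meet_eq_left[OF Y b hom_D(1)[OF f u(1)]] by simp
    qed
    show "(\<lambda>z. if z \<in> carrier (down Y b) then meet X m (snd f z) else undefined,
       \<lambda>u. if u \<in> carrier (down X m) then meet Y b (fst f u) else undefined) =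
      (\<lambda>x. if x \<in> carrier (down Y b) then m else undefined,
       \<lambda>z. if z \<in> carrier (down X m) then b else undefined)"
      using A B by (auto simp: fun_eq_iff)
  qed
qed

lemma comp2_eq:
  assumes Y: "is_oml Y" and c: "c \<in> carrier Y" and b: "b \<in> carrier Y"
  shows "comp (down Y b) Y (down Y c) (dagger (downmor Y c)) (downmor Y b)
    = (\<lambda>z. if z \<in> carrier (down Y b) then meet Y c (orth Y z) else undefined,
       \<lambda>u. if u \<in> carrier (down Y c) then meet Y b (orth Y u) else undefined)"
  using oml_orth[OF Y] oml_orth_orth[OF Y]
  unfolding comp_def dagger_def downmor_def
  by (auto simp: fun_eq_iff down_def)

lemma ker2:
  assumes Y: "is_oml Y" and c: "c \<in> carrier Y"
  shows "ker_el Y (down Y c) (dagger (downmor Y c)) = orth Y c"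
proof (rule ker_el_eq[OF Y oml_orth[OF Y c]])
  fix b assume b: "b \<in> carrier Y"
  show "comp (down Y b) Y (down Y c) (dagger (downmor Y c)) (downmor Y b) =
          zero_mor (down Y b) (down Y c) \<longleftrightarrow> le Y b (orth Y c)"
    unfolding comp2_eq[OF Y c b] zero_mor_eq top_down[OF Y c] top_down[OF Y b]
  proof
    assume h: "(\<lambda>z. if z \<in> carrier (down Y b) then meet Y c (orth Y z) else undefined,
       \<lambda>u. if u \<in> carrier (down Y c) then meet Y b (orth Y u) else undefined) =
      (\<lambda>x. if x \<in> carrier (down Y b) then c else undefined,
       \<lambda>z. if z \<in> carrier (down Y c) then b else undefined)"
    have "b \<in> carrier (down Y b)" using b oml_refl[OF Y] by (simp add: down_def)
    then have "meet Y c (orth Y b) = c" using fun_cong[OF arg_cong[OF h, of fst], of b] by simp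
    then have "le Y c (orth Y b)" using meet_eq_left[OF Y c oml_orth[OF Y b]] by simp
    then show "le Y b (orth Y c)" using oml_le_orth[OF Y c b] by simp
  next
    assume h: "le Y b (orth Y c)"
    have A: "meet Y c (orth Y z) = c" if "z \<in> carrier (down Y b)" for z
    proof -
      have z: "z \<in> carrier Y" "le Y z b" using that by (auto simp: down_def)
      have "le Y z (orth Y c)" using oml_trans[OF Y z(1) b oml_orth[OF Y c] z(2) h] .
      then show ?thesis using oml_le_orth[OF Y z(1) c] meet_eq_left[OF Y c oml_orth[OF Y z(1)]] by simp
    qed
    have B: "meet Y b (orth Y u) = b" if "u \<in> carrier (down Y c)" for u
    proof -
      have u: "u \<in> carrier Y" "le Y u c" using that by (auto simp: down_def)
      have "le Y (orth Y c) (orth Y u)" using oml_orth_anti[OF Y u(1) c u(2)] .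
      then have "le Y b (orth Y u)" using oml_trans[OF Y b oml_orth[OF Y c] oml_orth[OF Y u(1)] h] by simp
      then show ?thesis using meet_eq_left[OF Y b oml_orth[OF Y u(1)]] by simp
    qed
    show "(\<lambda>z. if z \<in> carrier (down Y b) then meet Y c (orth Y z) else undefined,
       \<lambda>u. if u \<in> carrier (down Y c) then meet Y b (orth Y u) else undefined) =
      (\<lambda>x. if x \<in> carrier (down Y b) then c else undefined,
       \<lambda>z. if z \<in> carrier (down Y c) then b else undefined)"
      using A B by (auto simp: fun_eq_iff)
  qed
qed

lemma ex_im_eq:
  assumes X: "is_oml X" and Y: "is_oml Y" and f: "f \<in> hom X Y" and m: "m \<in> carrier X"
  shows "ex_im X Y f m = orth Y (fst f m)"
  unfolding ex_im_def Let_def ker1[OF assms] using ker2[OF Y hom_D(1)[OF f m]] .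

lemma orth_top_le: assumes X: "is_oml X" and x: "x \<in> carrier X"
  shows "le X (orth X (Defs.top X)) x"
proof -
  have "le X (orth X x) (Defs.top X)" using top_prop[OF X] oml_orth[OF X x] by blast
  from oml_orth_anti[OF X oml_orth[OF X x] top_prop(1)[OF X] this] show ?thesis
    using oml_orth_orth[OF X x] by simp
qed

lemma f_orth_top: assumes X: "is_oml X" and Y: "is_oml Y" and f: "f \<in> hom X Y"
  shows "fst f (orth X (Defs.top X)) = Defs.top Y"
proof -
  have t: "orth X (Defs.top X) \<in> carrier X" using oml_orth[OF X top_prop(1)[OF X]] .
  show ?thesis
    apply (rule top_unique[OF Y hom_D(1)[OF f t], symmetric])
    using hom_D(4)[OF f t] hom_D(2)[OF f] orth_top_le[OF X] by blast
qed

lemma char_hom: assumes X: "is_oml X" and a: "a \<in> carrier X" shows "char X a \<in> hom two X"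
proof -
  have oa: "orth X a \<in> carrier X" using oml_orth[OF X a] .
  have tr: "\<And>y y'. y \<in> carrier X \<Longrightarrow> y' \<in> carrier X \<Longrightarrow> le X y y' \<Longrightarrow> le X y' (orth X a) \<Longrightarrow> le X y (orth X a)"
    using oml_trans[OF X _ _ oa] by blast
  have rf: "\<And>y. y \<in> carrier X \<Longrightarrow> le X y y" using oml_refl[OF X] by blast
  have tp: "Defs.top X \<in> carrier X" "\<And>y. y \<in> carrier X \<Longrightarrow> le X y (Defs.top X)" using top_prop[OF X] by auto
  show ?thesis
    unfolding hom_def char_def two_def mem_Collect_eq fst_conv snd_conv oml.simps
    apply (intro conjI)
    subgoal using oa tp by simp
    subgoal by simp
    subgoal using oa tp rf by (intro ballI impI, case_tac x; case_tac x'; simp)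
    subgoal using tr by simp
    subgoal using tp by simp
    subgoal by simp
    subgoal by simp
    done
qed

theorem mainTheorem9:
  fixes X :: "'a oml" and Y :: "'b oml" and f :: "('a, 'b) mor"
  assumes "is_oml X" and "is_oml Y" and "f \<in> hom X Y"
  shows "bij_betw (char X) (carrier X) (hom two X) \<and>
         (\<forall>m\<in>carrier X. char Y (ex_im X Y f m) = comp two X Y f (char X m))"
proof
  note X = assms(1) and Y = assms(2) and f = assms(3)
  show "bij_betw (char X) (carrier X) (hom two X)"
    unfolding bij_betw_def
  proof
    show "inj_on (char X) (carrier X)"
    proof (rule inj_onI)
      fix a b assume a: "a \<in> carrier X" and b: "b \<in> carrier X" and e: "char X a = char X b"
      have "orth X a = orth X b" using fun_cong[OF arg_cong[OF e, of fst], of True] by (simp add: char_def)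
      then show "a = b" using oml_orth_orth[OF X a] oml_orth_orth[OF X b] by metis
    qed
    show "char X ` carrier X = hom two X"
    proof
      show "char X ` carrier X \<subseteq> hom two X" using char_hom[OF X] by blast
      show "hom two X \<subseteq> char X ` carrier X"
      proof
        fix h assume h: "h \<in> hom two X"
        have hc: "\<And>x. x\<in>carrier X \<Longrightarrow> snd h x \<in> carrier two" "fst h True \<in> carrier X"
            "fst h False \<in> carrier X"
          using h unfolding hom_def two_def by auto
        have g: "\<And>b y. y \<in> carrier X \<Longrightarrow> le X y (fst h b) \<longleftrightarrow> (b \<longrightarrow> snd h y)"
          using h unfolding hom_def two_def by auto
        have un: "\<And>y. y \<notin> carrier X \<Longrightarrow> snd h y = undefined" using h unfolding hom_def by auto
        define a where "a = orth X (fst h True)"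
        have a: "a \<in> carrier X" using oml_orth[OF X hc(2)] a_def by simp
        have oa: "orth X a = fst h True" using oml_orth_orth[OF X hc(2)] a_def by simp
        have tF: "fst h False = Defs.top X"
          using top_unique[OF X hc(3)] g by auto
        have "h = char X a"
          unfolding char_def oa using tF g un
          by (auto simp: fun_eq_iff prod_eq_iff)
        then show "h \<in> char X ` carrier X" using a by blast
      qed
    qed
  qed
  show "\<forall>m\<in>carrier X. char Y (ex_im X Y f m) = comp two X Y f (char X m)"
  proof
    fix m assume m: "m \<in> carrier X"
    have fm: "fst f m \<in> carrier Y" using hom_D(1)[OF f m] .
    have sn: "\<And>z. z \<in> carrier Y \<Longrightarrow> le X (orth X (snd f z)) (orth X m) \<longleftrightarrow> le Y z (fst f m)"
      using hom_D(2,4)[OF f] m oml_le_orth[OF X] oml_orth[OF X] oml_orth_orth[OF X] by metis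
    show "char Y (ex_im X Y f m) = comp two X Y f (char X m)"
      unfolding ex_im_eq[OF X Y f m] char_def comp_def
      using oml_orth_orth[OF Y fm] oml_orth_orth[OF X m] f_orth_top[OF X Y f] sn
        oml_orth[OF X] hom_D(2)[OF f]
      by (auto simp: fun_eq_iff two_def)
  qed
qed

end
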